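(* Let $P$ be a bounded poset of finite length and $I\subset P$ a proper ideal. Then the geometric realizations $\|\Delta(\overline{\mathrm{Bier}(P,I)})\|$ and $\|\Delta(\overline P)\|$ are PL homeomorphic.
   Context: $\overline Q:=Q\setminus\{\hat0,\hat1\}$ denotes the proper part of a bounded poset $Q$ and $\Delta(\overline Q)$ its order complex (complex of chains). A proper ideal $I$ of $P$ is a nonempty down-closed subset different from $P$. The Bier poset $\mathrm{Bier}(P,I)$ consists of all intervals $[x,y]$ of $P$ with $x\in I$, $y\notin I$, ordered by reversed inclusion ($[x',y']\le[x,y]$ iff $x'\le x<y\le y'$), together with an additional top element $\hat1$. *)

theory Defs
  imports Complex_Main
begin

definition poset_on :: "'a set \<Rightarrow> ('a \<Rightarrow> 'a \<Rightarrow> bool) \<Rightarrow> bool" where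
  "poset_on P le \<longleftrightarrow>
     (\<forall>x\<in>P. le x x) \<and>
     (\<forall>x\<in>P. \<forall>y\<in>P. le x y \<and> le y x \<longrightarrow> x = y) \<and>
     (\<forall>x\<in>P. \<forall>y\<in>P. \<forall>z\<in>P. le x y \<and> le y z \<longrightarrow> le x z)"

definition bounded_poset :: "'a set \<Rightarrow> ('a \<Rightarrow> 'a \<Rightarrow> bool) \<Rightarrow> bool" where
  "bounded_poset P le \<longleftrightarrow> poset_on P le \<and>
     (\<exists>b\<in>P. \<forall>x\<in>P. le b x) \<and> (\<exists>t\<in>P. \<forall>x\<in>P. le x t)"

definition is_chain :: "'a set \<Rightarrow> ('a \<Rightarrow> 'a \<Rightarrow> bool) \<Rightarrow> bool" where
  "is_chain C le \<longleftrightarrow> (\<forall>x\<in>C. \<forall>y\<in>C. le x y \<or> le y x)"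

definition finite_length :: "'a set \<Rightarrow> ('a \<Rightarrow> 'a \<Rightarrow> bool) \<Rightarrow> bool" where
  "finite_length P le \<longleftrightarrow>
     (\<exists>n::nat. \<forall>C. C \<subseteq> P \<and> is_chain C le \<longrightarrow> finite C \<and> card C \<le> n)"

definition proper_ideal :: "'a set \<Rightarrow> ('a \<Rightarrow> 'a \<Rightarrow> bool) \<Rightarrow> 'a set \<Rightarrow> bool" where
  "proper_ideal P le I \<longleftrightarrow> I \<subseteq> P \<and> I \<noteq> {} \<and> I \<noteq> P \<and>
     (\<forall>x\<in>I. \<forall>y\<in>P. le y x \<longrightarrow> y \<in> I)"

definition proper_part :: "'a set \<Rightarrow> ('a \<Rightarrow> 'a \<Rightarrow> bool) \<Rightarrow> 'a set" where
  "proper_part Q le = {x\<in>Q. \<not> (\<forall>y\<in>Q. le x y) \<and> \<not> (\<forall>y\<in>Q. le y x)}"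

definition order_complex :: "'a set \<Rightarrow> ('a \<Rightarrow> 'a \<Rightarrow> bool) \<Rightarrow> 'a set set" where
  "order_complex S le = {c. c \<noteq> {} \<and> finite c \<and> c \<subseteq> S \<and> is_chain c le}"

text \<open>Elements: Some (x,y) stands for the interval [x,y]; None is the added top.\<close>
definition bier_carrier :: "'a set \<Rightarrow> ('a \<Rightarrow> 'a \<Rightarrow> bool) \<Rightarrow> 'a set \<Rightarrow> ('a \<times> 'a) option set" where
  "bier_carrier P le I =
     insert None (Some ` {(x, y). x \<in> I \<and> y \<in> P \<and> y \<notin> I \<and> le x y})"

fun bier_le :: "('a \<Rightarrow> 'a \<Rightarrow> bool) \<Rightarrow> ('a \<times> 'a) option \<Rightarrow> ('a \<times> 'a) option \<Rightarrow> bool" where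
  "bier_le le _ None = True"
| "bier_le le None (Some _) = False"
| "bier_le le (Some (x', y')) (Some (x, y)) = (le x' x \<and> le y y')"

definition simplicial_complex :: "'v set set \<Rightarrow> bool" where
  "simplicial_complex K \<longleftrightarrow> (\<forall>\<sigma>\<in>K. finite \<sigma> \<and> \<sigma> \<noteq> {}) \<and>
     (\<forall>\<sigma>\<in>K. \<forall>\<tau>. \<tau> \<subseteq> \<sigma> \<and> \<tau> \<noteq> {} \<longrightarrow> \<tau> \<in> K)"

text \<open>Geometric simplex of a face, as barycentric coordinate functions.\<close>
definition face_simplex :: "'v set \<Rightarrow> ('v \<Rightarrow> real) set" where
  "face_simplex \<sigma> = {f. (\<forall>v. 0 \<le> f v) \<and> (\<forall>v. v \<notin> \<sigma> \<longrightarrow> f v = 0) \<and> sum f \<sigma> = 1}"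

definition realization :: "'v set set \<Rightarrow> ('v \<Rightarrow> real) set" where
  "realization K = (\<Union>\<sigma>\<in>K. face_simplex \<sigma>)"

text \<open>For a complex whose vertices are points (coordinate functions), the affine
  map sending a barycentric combination of vertices to the corresponding point.\<close>
definition lin_ext :: "(('v \<Rightarrow> real) \<Rightarrow> real) \<Rightarrow> ('v \<Rightarrow> real)" where
  "lin_ext f = (\<lambda>v. \<Sum>p\<in>{p. f p \<noteq> 0}. f p * p v)"

definition subdivision :: "('v \<Rightarrow> real) set set \<Rightarrow> 'v set set \<Rightarrow> bool" where
  "subdivision K' K \<longleftrightarrow> simplicial_complex K' \<and>
     \<Union>K' \<subseteq> realization K \<and>
     inj_on lin_ext (realization K') \<and>
     (\<forall>\<tau>\<in>K'. \<exists>\<sigma>\<in>K. lin_ext ` face_simplex \<tau> \<subseteq> face_simplex \<sigma>) \<and>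
     (\<forall>\<sigma>\<in>K. \<exists>F. finite F \<and> F \<subseteq> K' \<and> face_simplex \<sigma> = (\<Union>\<tau>\<in>F. lin_ext ` face_simplex \<tau>))"

definition simplicial_iso :: "'v set set \<Rightarrow> 'w set set \<Rightarrow> bool" where
  "simplicial_iso K L \<longleftrightarrow> (\<exists>\<phi>. bij_betw \<phi> (\<Union>K) (\<Union>L) \<and>
     (\<forall>\<tau>. \<tau> \<subseteq> \<Union>K \<longrightarrow> (\<tau> \<in> K \<longleftrightarrow> \<phi> ` \<tau> \<in> L)))"

definition PL_homeomorphic :: "'v set set \<Rightarrow> 'w set set \<Rightarrow> bool" where
  "PL_homeomorphic K L \<longleftrightarrow>
     (\<exists>K' L'. subdivision K' K \<and> subdivision L' L \<and> simplicial_iso K' L')"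

end

theory Submission
  imports Defs
begin


lemma chain_has_top:
  assumes "finite C" "C \<noteq> {}" "is_chain C R"
    and "\<forall>a\<in>C. \<forall>b\<in>C. \<forall>c\<in>C. R a b \<and> R b c \<longrightarrow> R a c"
  shows "\<exists>t\<in>C. \<forall>v\<in>C. R v t"
  using assms(1,2,3,4)
proof (induction C rule: finite_ne_induct)
  case (singleton x)
  then have "R x x" unfolding is_chain_def by blast
  then show ?case by simp
next
  case (insert x F)
  have ch: "is_chain F R" using insert.prems(1) unfolding is_chain_def by blast
  have tr: "\<forall>a\<in>F. \<forall>b\<in>F. \<forall>c\<in>F. R a b \<and> R b c \<longrightarrow> R a c"
    using insert.prems(2) by (meson insertCI)
  from insert.IH[OF ch tr] obtain t where t: "t\<in>F" "\<forall>v\<in>F. R v t" by blast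
  have xx: "R x x" using insert.prems(1) unfolding is_chain_def by blast
  have xt: "R x t \<or> R t x" using insert.prems(1) t(1) unfolding is_chain_def by blast
  show ?case
  proof (cases "R t x")
    case True
    have "R v x" if "v \<in> F" for v
    proof -
      have "R v t" using t(2) that by blast
      moreover have "x \<in> insert x F" "v \<in> insert x F" "t \<in> insert x F" using that t(1) by auto
      ultimately show ?thesis using insert.prems(2) True by meson
    qed
    then show ?thesis using xx by blast
  next
    case False
    then have "R x t" using xt by simp
    then show ?thesis using t by blast
  qed
qed

lemma sc_order_complex: "simplicial_complex (order_complex S R)"
  unfolding simplicial_complex_def
proof (rule conjI; intro ballI allI impI)
  fix s assume "s \<in> order_complex S R"
  then show "finite s \<and> s \<noteq> {}" by (simp add: order_complex_def)
next
  fix s \<tau> assume s: "s \<in> order_complex S R" and t: "\<tau> \<subseteq> s \<and> \<tau> \<noteq> {}"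
  from s have "finite s" "s \<subseteq> S" "is_chain s R" by (auto simp: order_complex_def)
  moreover from t have "\<tau> \<subseteq> s" "\<tau> \<noteq> {}" by auto
  ultimately have "finite \<tau>" "\<tau> \<subseteq> S" "is_chain \<tau> R"
    by (auto simp: is_chain_def dest: finite_subset)
  then show "\<tau> \<in> order_complex S R" using \<open>\<tau> \<noteq> {}\<close> by (simp add: order_complex_def)
qed

lemma sc_image:
  assumes "simplicial_complex K"
  shows "simplicial_complex ((`) f ` K)"
  unfolding simplicial_complex_def
proof (rule conjI; intro ballI allI impI)
  fix s assume "s \<in> (`) f ` K"
  then obtain \<sigma> where "\<sigma> \<in> K" "s = f ` \<sigma>" by auto
  then show "finite s \<and> s \<noteq> {}" using assms unfolding simplicial_complex_def by auto
next
  fix s \<tau> assume s: "s \<in> (`) f ` K" and t: "\<tau> \<subseteq> s \<and> \<tau> \<noteq> {}"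
  then obtain \<sigma> where \<sigma>: "\<sigma> \<in> K" "s = f ` \<sigma>" by auto
  let ?r = "{v\<in>\<sigma>. f v \<in> \<tau>}"
  have "\<tau> = f ` ?r" using t \<sigma> by auto
  moreover have "?r \<in> K"
  proof -
    have all: "\<forall>\<tau>. \<tau> \<subseteq> \<sigma> \<and> \<tau> \<noteq> {} \<longrightarrow> \<tau> \<in> K" using assms \<sigma>(1) unfolding simplicial_complex_def by blast
    have "?r \<subseteq> \<sigma>" by auto
    moreover have "?r \<noteq> {}" using t \<sigma>(2) by auto
    ultimately show ?thesis using all by blast
  qed
  ultimately show "\<tau> \<in> (`) f ` K" by auto
qed

definition dlt :: "'v \<Rightarrow> 'v \<Rightarrow> real" where
  "dlt v = (\<lambda>w. if w = v then 1 else 0)"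

lemma dlt_inj: "inj dlt"
proof (rule injI)
  fix x y :: 'v assume "dlt x = dlt y"
  then have "dlt x x = dlt y x" by simp
  then show "x = y" by (simp add: dlt_def split: if_splits)
qed

lemma lin_ext_dlt:
  assumes "finite {p. f p \<noteq> 0}" "{p. f p \<noteq> 0} \<subseteq> range dlt"
  shows "lin_ext f v = f (dlt v)"
proof -
  let ?X = "{p. f p \<noteq> 0}"
  have "lin_ext f v = (\<Sum>p\<in>?X. f p * p v)" by (simp add: lin_ext_def)
  also have "\<dots> = (\<Sum>p\<in>?X. if p = dlt v then f p else 0)"
  proof (rule sum.cong)
    fix p assume "p \<in> ?X"
    then obtain u where "p = dlt u" using assms(2) by auto
    then show "f p * p v = (if p = dlt v then f p else 0)"
      using dlt_inj by (auto simp: dlt_def inj_def)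
  qed simp
  also have "\<dots> = (if dlt v \<in> ?X then f (dlt v) else 0)"
    using assms(1) by (simp add: sum.delta)
  also have "\<dots> = f (dlt v)" by auto
  finally show ?thesis .
qed

lemma face_simplex_supp:
  assumes "f \<in> face_simplex \<sigma>" "finite \<sigma>"
  shows "{p. f p \<noteq> 0} \<subseteq> \<sigma>" "finite {p. f p \<noteq> 0}"
  using assms unfolding face_simplex_def by (auto intro: finite_subset)

lemma subdivision_trivial:
  assumes K: "simplicial_complex K"
  shows "subdivision ((`) dlt ` K) K"
  unfolding subdivision_def
proof (intro conjI)
  show "simplicial_complex ((`) dlt ` K)" using sc_image[OF K] .
  have fin: "\<And>\<sigma>. \<sigma> \<in> K \<Longrightarrow> finite \<sigma>" using K unfolding simplicial_complex_def by auto
  have single: "{v} \<in> K" if "\<sigma> \<in> K" "v \<in> \<sigma>" for \<sigma> v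
  proof -
    have "\<forall>\<tau>. \<tau> \<subseteq> \<sigma> \<and> \<tau> \<noteq> {} \<longrightarrow> \<tau> \<in> K" using K that(1) unfolding simplicial_complex_def by blast
    then show ?thesis using that(2) by simp
  qed
  have le_ok: "lin_ext f = (\<lambda>v. f (dlt v))" if "f \<in> face_simplex (dlt ` \<sigma>)" "\<sigma> \<in> K" for f \<sigma>
  proof -
    have "finite (dlt ` \<sigma>)" using fin[OF that(2)] by auto
    from face_simplex_supp[OF that(1) this] show ?thesis
      by (intro ext lin_ext_dlt) auto
  qed
  have img: "lin_ext ` face_simplex (dlt ` \<sigma>) = face_simplex \<sigma>" if "\<sigma> \<in> K" for \<sigma>
  proof
    show "lin_ext ` face_simplex (dlt ` \<sigma>) \<subseteq> face_simplex \<sigma>"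
    proof
      fix g assume "g \<in> lin_ext ` face_simplex (dlt ` \<sigma>)"
      then obtain f where f: "f \<in> face_simplex (dlt ` \<sigma>)" "g = lin_ext f" by auto
      then have g: "g = (\<lambda>v. f (dlt v))" using le_ok that by auto
      have "sum f (dlt ` \<sigma>) = 1" using f unfolding face_simplex_def by auto
      moreover have "sum f (dlt ` \<sigma>) = sum (f \<circ> dlt) \<sigma>"
        by (rule sum.reindex) (use dlt_inj in \<open>auto simp: inj_on_def inj_def\<close>)
      ultimately have "sum (\<lambda>v. f (dlt v)) \<sigma> = 1" by (simp add: comp_def)
      moreover have "dlt v \<notin> dlt ` \<sigma>" if "v \<notin> \<sigma>" for v
        using that dlt_inj by (auto simp: inj_def)
      ultimately show "g \<in> face_simplex \<sigma>" using f(1) g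
        unfolding face_simplex_def by auto
    qed
  next
    show "face_simplex \<sigma> \<subseteq> lin_ext ` face_simplex (dlt ` \<sigma>)"
    proof
      fix h assume h: "h \<in> face_simplex \<sigma>"
      define f where "f = (\<lambda>p. if p \<in> range dlt then h (inv dlt p) else 0)"
      have fd: "f (dlt v) = h v" for v using dlt_inj by (simp add: f_def inv_f_f[OF dlt_inj])
      have "f \<in> face_simplex (dlt ` \<sigma>)"
        unfolding face_simplex_def
      proof (intro CollectI conjI allI impI)
        fix p
        have hn: "\<forall>v. 0 \<le> h v" using h by (simp add: face_simplex_def)
        then show "0 \<le> f p" by (simp add: f_def)
      next
        fix p assume p: "p \<notin> dlt ` \<sigma>"
        show "f p = 0"
        proof (cases "p \<in> range dlt")
          case True
          then obtain u where u: "p = dlt u" by blast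
          with p have "u \<notin> \<sigma>" by blast
          then show ?thesis using fd[of u] h u by (simp add: face_simplex_def)
        next
          case False then show ?thesis by (simp add: f_def)
        qed
      next
        have "sum f (dlt ` \<sigma>) = sum (f \<circ> dlt) \<sigma>"
          by (rule sum.reindex) (use dlt_inj in \<open>auto simp: inj_on_def inj_def\<close>)
        also have "\<dots> = sum h \<sigma>" by (simp add: fd comp_def)
        finally show "sum f (dlt ` \<sigma>) = 1" using h by (simp add: face_simplex_def)
      qed
      moreover have "lin_ext f = h" using le_ok[OF calculation that] fd by auto
      ultimately show "h \<in> lin_ext ` face_simplex (dlt ` \<sigma>)" by (metis image_eqI)
    qed
  qed
  show "\<Union> ((`) dlt ` K) \<subseteq> realization K"
  proof
    fix p assume "p \<in> \<Union> ((`) dlt ` K)"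
    then obtain \<sigma> v where "\<sigma> \<in> K" "v \<in> \<sigma>" "p = dlt v" by auto
    moreover have "dlt v \<in> face_simplex {v}" by (auto simp: face_simplex_def dlt_def)
    moreover have "{v} \<in> K" using single calculation(1,2) .
    ultimately show "p \<in> realization K" unfolding realization_def by (metis UN_I)
  qed
  show "inj_on lin_ext (realization ((`) dlt ` K))"
  proof (rule inj_onI)
    fix f g assume f: "f \<in> realization ((`) dlt ` K)" and g: "g \<in> realization ((`) dlt ` K)"
      and eq: "lin_ext f = lin_ext g"
    from f obtain \<sigma> where \<sigma>: "\<sigma> \<in> K" "f \<in> face_simplex (dlt ` \<sigma>)" unfolding realization_def by auto
    from g obtain \<tau> where \<tau>: "\<tau> \<in> K" "g \<in> face_simplex (dlt ` \<tau>)" unfolding realization_def by auto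
    have fg: "(\<lambda>v. f (dlt v)) = (\<lambda>v. g (dlt v))" using eq le_ok[OF \<sigma>(2,1)] le_ok[OF \<tau>(2,1)] by simp
    show "f = g"
    proof (rule ext)
      fix p
      show "f p = g p"
      proof (cases "p \<in> range dlt")
        case True
        then obtain u where u: "p = dlt u" by blast
        show ?thesis using fun_cong[OF fg, of u] u by simp
      next
        case False
        then have "p \<notin> dlt ` \<sigma>" "p \<notin> dlt ` \<tau>" by auto
        then show ?thesis using \<sigma>(2) \<tau>(2) unfolding face_simplex_def by simp
      qed
    qed
  qed
  show "\<forall>\<tau>\<in>(`) dlt ` K. \<exists>\<sigma>\<in>K. lin_ext ` face_simplex \<tau> \<subseteq> face_simplex \<sigma>"
    using img by blast
  show "\<forall>\<sigma>\<in>K. \<exists>F. finite F \<and> F \<subseteq> (`) dlt ` K \<and> face_simplex \<sigma> = (\<Union>\<tau>\<in>F. lin_ext ` face_simplex \<tau>)"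
  proof
    fix \<sigma> assume "\<sigma> \<in> K"
    then show "\<exists>F. finite F \<and> F \<subseteq> (`) dlt ` K \<and> face_simplex \<sigma> = (\<Union>\<tau>\<in>F. lin_ext ` face_simplex \<tau>)"
      using img by (intro exI[of _ "{dlt ` \<sigma>}"]) auto
  qed
qed

lemma iso_images:
  assumes "inj_on f (\<Union>K)" "inj_on h (\<Union>K)"
  shows "simplicial_iso ((`) f ` K) ((`) h ` K)"
  unfolding simplicial_iso_def
proof (intro exI conjI allI impI)
  let ?g = "the_inv_into (\<Union>K) f"
  have U1: "\<Union>((`) f ` K) = f ` \<Union>K" and U2: "\<Union>((`) h ` K) = h ` \<Union>K" by auto
  have bg: "bij_betw ?g (f ` \<Union>K) (\<Union>K)"
    using assms(1) by (simp add: bij_betw_the_inv_into inj_on_imp_bij_betw)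
  have bh: "bij_betw h (\<Union>K) (h ` \<Union>K)" using assms(2) by (simp add: inj_on_imp_bij_betw)
  show "bij_betw (h \<circ> ?g) (\<Union>((`) f ` K)) (\<Union>((`) h ` K))"
    unfolding U1 U2 using bij_betw_trans[OF bg bh] .
  fix \<tau> assume tau0: "\<tau> \<subseteq> \<Union>((`) f ` K)"
  have U1: "\<Union>((`) f ` K) = f ` \<Union>K" by auto
  with tau0 have \<tau>: "\<tau> \<subseteq> f ` \<Union>K" using U1 by simp
  define \<tau>0 where "\<tau>0 = ?g ` \<tau>"
  have t0: "\<tau>0 \<subseteq> \<Union>K" using \<tau> the_inv_into_into[OF assms(1) _ subset_refl] unfolding \<tau>0_def by blast
  have fg: "\<forall>y\<in>\<tau>. f (?g y) = y" using \<tau> f_the_inv_into_f[OF assms(1)] by blast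
  have "f ` \<tau>0 = (\<lambda>y. f (?g y)) ` \<tau>" unfolding \<tau>0_def by (simp add: image_image)
  also have "\<dots> = (\<lambda>y. y) ` \<tau>" by (rule image_cong) (use fg in auto)
  finally have ft: "f ` \<tau>0 = \<tau>" by simp
  have ht: "(h \<circ> ?g) ` \<tau> = h ` \<tau>0" unfolding \<tau>0_def by (simp add: image_comp)
  have eqf: "f ` A = f ` B \<longleftrightarrow> A = B" if "A \<subseteq> \<Union>K" "B \<subseteq> \<Union>K" for A B
    using inj_on_image_eq_iff[OF assms(1) that] .
  have eqh: "h ` A = h ` B \<longleftrightarrow> A = B" if "A \<subseteq> \<Union>K" "B \<subseteq> \<Union>K" for A B
    using inj_on_image_eq_iff[OF assms(2) that] .
  have "\<tau> \<in> (`) f ` K \<longleftrightarrow> \<tau>0 \<in> K"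
  proof
    assume "\<tau> \<in> (`) f ` K" then obtain c where c: "c \<in> K" "\<tau> = f ` c" by auto
    then have cK: "c \<subseteq> \<Union>K" by auto
    from c(2) ft have "f ` \<tau>0 = f ` c" by simp
    then have "\<tau>0 = c" using eqf[OF t0 cK] by simp
    then show "\<tau>0 \<in> K" using c(1) by simp
  next
    assume "\<tau>0 \<in> K" then show "\<tau> \<in> (`) f ` K" by (metis ft imageI)
  qed
  also have "\<dots> \<longleftrightarrow> h ` \<tau>0 \<in> (`) h ` K"
  proof
    assume "h ` \<tau>0 \<in> (`) h ` K" then obtain c where c: "c \<in> K" "h ` \<tau>0 = h ` c" by auto
    then have cK: "c \<subseteq> \<Union>K" by auto
    then have "\<tau>0 = c" using eqh[OF t0 cK] c(2) by simp
    then show "\<tau>0 \<in> K" using c(1) by simp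
  next
    assume "\<tau>0 \<in> K" then show "h ` \<tau>0 \<in> (`) h ` K" by (rule imageI)
  qed
  finally show "\<tau> \<in> (`) f ` K \<longleftrightarrow> (h \<circ> ?g) ` \<tau> \<in> (`) h ` K" using ht by simp
qed




locale bier_setup =
  fixes P :: "'a set" and le :: "'a \<Rightarrow> 'a \<Rightarrow> bool" and I :: "'a set"
  assumes bp: "bounded_poset P le" and pid: "proper_ideal P le I"
begin

lemma refl: "x \<in> P \<Longrightarrow> le x x"
  using bp unfolding bounded_poset_def poset_on_def by blast

lemma antisym: "x \<in> P \<Longrightarrow> y \<in> P \<Longrightarrow> le x y \<Longrightarrow> le y x \<Longrightarrow> x = y"
  using bp unfolding bounded_poset_def poset_on_def by blast

lemma trans: "x \<in> P \<Longrightarrow> y \<in> P \<Longrightarrow> z \<in> P \<Longrightarrow> le x y \<Longrightarrow> le y z \<Longrightarrow> le x z"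
  using bp unfolding bounded_poset_def poset_on_def by blast

definition bot where "bot = (SOME b. b \<in> P \<and> (\<forall>x\<in>P. le b x))"
definition top where "top = (SOME t. t \<in> P \<and> (\<forall>x\<in>P. le x t))"

lemma bot_prop: "bot \<in> P \<and> (\<forall>x\<in>P. le bot x)"
proof -
  have "\<exists>b. b \<in> P \<and> (\<forall>x\<in>P. le b x)" using bp unfolding bounded_poset_def by blast
  then show ?thesis unfolding bot_def by (rule someI_ex)
qed

lemma top_prop: "top \<in> P \<and> (\<forall>x\<in>P. le x top)"
proof -
  have "\<exists>b. b \<in> P \<and> (\<forall>x\<in>P. le x b)" using bp unfolding bounded_poset_def by blast
  then show ?thesis unfolding top_def by (rule someI_ex)
qed

lemma bot_P: "bot \<in> P" and bot_le: "x \<in> P \<Longrightarrow> le bot x"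
  using bot_prop by auto

lemma top_P: "top \<in> P" and le_top: "x \<in> P \<Longrightarrow> le x top"
  using top_prop by auto

lemma I_sub: "I \<subseteq> P" using pid unfolding proper_ideal_def by blast

lemma I_down: "x \<in> I \<Longrightarrow> y \<in> P \<Longrightarrow> le y x \<Longrightarrow> y \<in> I"
  using pid unfolding proper_ideal_def by blast

lemma I_P: "x \<in> I \<Longrightarrow> x \<in> P" using I_sub by blast

lemma bot_I: "bot \<in> I"
proof -
  obtain x where "x \<in> I" using pid unfolding proper_ideal_def by blast
  then show ?thesis using I_down[of x bot] bot_P bot_le I_P by blast
qed

lemma top_nI: "top \<notin> I"
proof
  assume t: "top \<in> I"
  have "P \<subseteq> I"
  proof
    fix y assume "y \<in> P" then show "y \<in> I" using I_down[OF t] le_top by blast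
  qed
  then show False using pid I_sub unfolding proper_ideal_def by blast
qed

lemma bot_ne_top: "bot \<noteq> top" using bot_I top_nI by auto

lemma pp_P: "z \<in> proper_part P le \<longleftrightarrow> z \<in> P \<and> z \<noteq> bot \<and> z \<noteq> top"
proof
  assume "z \<in> proper_part P le"
  then have z: "z \<in> P" "\<not> (\<forall>y\<in>P. le z y)" "\<not> (\<forall>y\<in>P. le y z)" by (auto simp: proper_part_def)
  have "z \<noteq> bot" using z(2) bot_le by blast
  moreover have "z \<noteq> top" using z(3) le_top by blast
  ultimately show "z \<in> P \<and> z \<noteq> bot \<and> z \<noteq> top" using z(1) by blast
next
  assume z: "z \<in> P \<and> z \<noteq> bot \<and> z \<noteq> top"
  have "\<not> (\<forall>y\<in>P. le z y)"
  proof
    assume "\<forall>y\<in>P. le z y"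
    then have "le z bot" using bot_P by blast
    then show False using antisym[of z bot] z bot_P bot_le by blast
  qed
  moreover have "\<not> (\<forall>y\<in>P. le y z)"
  proof
    assume "\<forall>y\<in>P. le y z"
    then have "le top z" using top_P by blast
    then show False using antisym[of z top] z top_P le_top by blast
  qed
  ultimately show "z \<in> proper_part P le" using z by (simp add: proper_part_def)
qed

abbreviation "BL \<equiv> bier_le le"
definition "BP = proper_part (bier_carrier P le I) BL"

definition good :: "'a \<Rightarrow> 'a \<Rightarrow> bool" where
  "good x y \<longleftrightarrow> x \<in> I \<and> y \<in> P \<and> y \<notin> I \<and> le x y \<and> \<not> (x = bot \<and> y = top)"

lemma BP_char: "v \<in> BP \<longleftrightarrow> (\<exists>x y. v = Some (x, y) \<and> good x y)"
proof
  assume v: "v \<in> BP"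
  then have vc: "v \<in> bier_carrier P le I" and nb: "\<not> (\<forall>w\<in>bier_carrier P le I. BL v w)"
    and nt: "\<not> (\<forall>w\<in>bier_carrier P le I. BL w v)"
    by (auto simp: BP_def proper_part_def)
  have "v \<noteq> None"
  proof
    assume "v = None"
    then have "\<forall>w\<in>bier_carrier P le I. BL w v" by simp
    with nt show False by blast
  qed
  then obtain x y where xy: "v = Some (x, y)" "x \<in> I" "y \<in> P" "y \<notin> I" "le x y"
    using vc by (auto simp: bier_carrier_def)
  have "\<not> (x = bot \<and> y = top)"
  proof
    assume bt: "x = bot \<and> y = top"
    have "BL v w" if wc: "w \<in> bier_carrier P le I" for w
    proof (cases w)
      case None then show ?thesis by simp
    next
      case (Some p)
      then obtain x' y' where "w = Some (x', y')" "x' \<in> I" "y' \<in> P"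
        using wc Some by (auto simp: bier_carrier_def)
      then show ?thesis using xy bt bot_le le_top I_P by simp
    qed
    then show False using nb by blast
  qed
  then show "\<exists>x y. v = Some (x, y) \<and> good x y" using xy by (auto simp: good_def)
next
  assume "\<exists>x y. v = Some (x, y) \<and> good x y"
  then obtain x y where xy: "v = Some (x, y)" "good x y" by blast
  then have g: "x \<in> I" "y \<in> P" "y \<notin> I" "le x y" "\<not> (x = bot \<and> y = top)" by (auto simp: good_def)
  have vc: "v \<in> bier_carrier P le I" using xy g by (auto simp: bier_carrier_def)
  have btc: "Some (bot, top) \<in> bier_carrier P le I"
    using bot_I top_P top_nI le_top[OF bot_P] by (auto simp: bier_carrier_def)
  have "\<not> BL v (Some (bot, top))"
  proof
    assume "BL v (Some (bot, top))"
    then have "le x bot" "le top y" using xy by auto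
    then have "x = bot" "y = top" using antisym bot_P bot_le top_P le_top g I_P by blast+
    then show False using g by blast
  qed
  then have "\<not> (\<forall>w\<in>bier_carrier P le I. BL v w)" using btc by blast
  moreover have "None \<in> bier_carrier P le I" by (simp add: bier_carrier_def)
  then have "\<not> (\<forall>w\<in>bier_carrier P le I. BL w v)" using xy by force
  ultimately show "v \<in> BP" using vc by (simp add: BP_def proper_part_def)
qed

lemma good_props:
  assumes "good x y"
  shows "x \<in> I" "x \<in> P" "y \<in> P" "y \<notin> I" "le x y" "x \<noteq> y" "\<not> (x = bot \<and> y = top)"
  using assms I_P by (auto simp: good_def)

lemma BP_SomeE:
  assumes "v \<in> BP"
  obtains x y where "v = Some (x, y)" "good x y"
  using assms BP_char by blast

lemma BL_trans:
  assumes "u \<in> BP" "v \<in> BP" "w \<in> BP" "BL u v" "BL v w"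
  shows "BL u w"
proof -
  obtain x1 y1 where 1: "u = Some (x1, y1)" "good x1 y1" using assms(1) by (rule BP_SomeE)
  obtain x2 y2 where 2: "v = Some (x2, y2)" "good x2 y2" using assms(2) by (rule BP_SomeE)
  obtain x3 y3 where 3: "w = Some (x3, y3)" "good x3 y3" using assms(3) by (rule BP_SomeE)
  have "le x1 x2" "le y2 y1" "le x2 x3" "le y3 y2" using assms(4,5) 1 2 3 by auto
  then have "le x1 x3" "le y3 y1" using trans good_props 1 2 3 by metis+
  then show ?thesis using 1 3 by simp
qed

lemma BL_refl: "v \<in> BP \<Longrightarrow> BL v v"
  by (metis BP_SomeE bier_le.simps(3) good_props(2,3) refl)

lemma BL_antisym: "u \<in> BP \<Longrightarrow> v \<in> BP \<Longrightarrow> BL u v \<Longrightarrow> BL v u \<Longrightarrow> u = v"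
proof -
  assume a: "u \<in> BP" "v \<in> BP" "BL u v" "BL v u"
  obtain x1 y1 where 1: "u = Some (x1, y1)" "good x1 y1" using a(1) by (rule BP_SomeE)
  obtain x2 y2 where 2: "v = Some (x2, y2)" "good x2 y2" using a(2) by (rule BP_SomeE)
  have "le x1 x2" "le y2 y1" "le x2 x1" "le y1 y2" using a 1 2 by auto
  then have "x1 = x2" "y1 = y2" using antisym good_props 1 2 by metis+
  then show ?thesis using 1 2 by simp
qed

end



context bier_setup
begin

definition cx :: "'a \<Rightarrow> 'a \<Rightarrow> real" where
  "cx x y = (if x = bot then 0 else if y = top then 1 else 1/2)"
definition cy :: "'a \<Rightarrow> 'a \<Rightarrow> real" where
  "cy x y = (if y = top then 0 else if x = bot then 1 else 1/2)"
definition gp :: "'a \<Rightarrow> 'a \<Rightarrow> 'a \<Rightarrow> real" where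
  "gp x y z = (if z = x then cx x y else 0) + (if z = y then cy x y else 0)"
definition gv :: "('a \<times> 'a) option \<Rightarrow> 'a \<Rightarrow> real" where
  "gv v = (case v of None \<Rightarrow> (\<lambda>z. 0) | Some xy \<Rightarrow> gp (fst xy) (snd xy))"

lemma gv_Some[simp]: "gv (Some (x, y)) = gp x y" by (simp add: gv_def)

lemma gp_nonneg: "0 \<le> gp x y z" by (simp add: gp_def cx_def cy_def)

lemma gv_nonneg: "0 \<le> gv v z"
  by (cases v) (auto simp: gv_def gp_nonneg)

lemma gp_x: "good x y \<Longrightarrow> x \<noteq> bot \<Longrightarrow> gp x y x > 0"
  using good_props(6)[of x y] by (simp add: gp_def cx_def)

lemma gp_y: "good x y \<Longrightarrow> y \<noteq> top \<Longrightarrow> gp x y y > 0"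
  using good_props(6)[of x y] by (simp add: gp_def cy_def)

lemma gp_nz: "good x y \<Longrightarrow> gp x y z \<noteq> 0 \<Longrightarrow> (z = x \<and> x \<noteq> bot) \<or> (z = y \<and> y \<noteq> top)"
  by (auto simp: gp_def cx_def cy_def split: if_splits)

lemma gp_mass:
  assumes g: "good x y" and S: "finite S" and sub: "\<forall>z. gp x y z \<noteq> 0 \<longrightarrow> z \<in> S"
  shows "sum (gp x y) S = 1"
proof -
  have ne: "x \<noteq> y" using good_props(6)[OF g] .
  have "sum (gp x y) S = (\<Sum>z\<in>S. if z = x then cx x y else 0) + (\<Sum>z\<in>S. if z = y then cy x y else 0)"
    unfolding gp_def by (rule sum.distrib)
  also have "\<dots> = (if x \<in> S then cx x y else 0) + (if y \<in> S then cy x y else 0)"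
    using S by (simp add: sum.delta')
  also have "(if x \<in> S then cx x y else 0) = cx x y"
  proof (cases "x \<in> S")
    case False
    then have "gp x y x = 0" using sub by blast
    then show ?thesis using ne False by (simp add: gp_def)
  qed simp
  also have "(if y \<in> S then cy x y else 0) = cy x y"
  proof (cases "y \<in> S")
    case False
    then have "gp x y y = 0" using sub by blast
    then show ?thesis using ne False by (simp add: gp_def)
  qed simp
  also have "cx x y + cy x y = 1" using good_props(7)[OF g] by (auto simp: cx_def cy_def)
  finally show ?thesis .
qed

lemma pos_exists:
  assumes "v \<in> BP" shows "\<exists>z. gv v z > 0"
proof -
  obtain x y where v: "v = Some (x, y)" "good x y" using assms by (rule BP_SomeE)
  show ?thesis
  proof (cases "x = bot")
    case True
    then have "y \<noteq> top" using good_props(7)[OF v(2)] by blast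
    then show ?thesis using gp_y[OF v(2)] v(1) by auto
  next
    case False
    then show ?thesis using gp_x[OF v(2)] v(1) by auto
  qed
qed

definition V :: "('a \<times> 'a) option set \<Rightarrow> (('a \<times> 'a) option \<Rightarrow> real) \<Rightarrow> 'a \<Rightarrow> real" where
  "V C m z = (\<Sum>v\<in>C. m v * gv v z)"

lemma V_empty: "V {} m = (\<lambda>z. 0)" by (simp add: V_def fun_eq_iff)

lemma V_pos:
  assumes "finite C" "\<forall>u\<in>C. m u \<ge> 0" "v \<in> C" "gv v z > 0" "m v > 0"
  shows "V C m z > 0"
proof -
  have "0 < m v * gv v z" using assms by simp
  also have "\<dots> \<le> (\<Sum>u\<in>C. m u * gv u z)"
    by (rule member_le_sum) (use assms gv_nonneg in auto)
  finally show ?thesis by (simp add: V_def)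
qed

lemma V_nz:
  assumes "V C m z \<noteq> 0" shows "\<exists>v\<in>C. gv v z \<noteq> 0"
proof -
  from assms have "(\<Sum>v\<in>C. m v * gv v z) \<noteq> 0" by (simp add: V_def)
  then obtain v where "v \<in> C" "m v * gv v z \<noteq> 0" by (rule sum.not_neutral_contains_not_neutral)
  then show ?thesis by auto
qed

lemma comp_I: "good x y \<Longrightarrow> z \<in> I \<Longrightarrow> gp x y z \<noteq> 0 \<Longrightarrow> z = x"
  using gp_nz good_props(4) by blast

lemma comp_nI: "good x y \<Longrightarrow> z \<notin> I \<Longrightarrow> gp x y z \<noteq> 0 \<Longrightarrow> z = y"
  using gp_nz good_props(1) by blast

lemma V_zero_empty:
  assumes "finite C" "C \<subseteq> BP" "\<forall>v\<in>C. m v > 0" "V C m = (\<lambda>z. 0)"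
  shows "C = {}"
proof (rule ccontr)
  assume "C \<noteq> {}"
  then obtain v where v: "v \<in> C" by blast
  then obtain z where "gv v z > 0" using pos_exists assms(2) by blast
  then have "V C m z > 0" using V_pos[of C m v z] assms v by (auto intro: less_imp_le)
  then show False using assms(4) by simp
qed

lemma top_BL:
  assumes "finite C1" "C1 \<subseteq> BP" "\<forall>v\<in>C1. m1 v > 0" "V C1 m1 = V C2 m2"
    and "t1 \<in> C1" "t2 \<in> BP" "C2 \<subseteq> BP" "\<forall>v\<in>C2. BL v t2"
  shows "BL t1 t2"
proof -
  obtain x1 y1 where 1: "t1 = Some (x1, y1)" "good x1 y1" using assms(2,5) by (meson BP_SomeE subsetD)
  obtain x2 y2 where 2: "t2 = Some (x2, y2)" "good x2 y2" using assms(6) by (rule BP_SomeE)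
  have nn: "\<forall>u\<in>C1. m1 u \<ge> 0" using assms(3) by (auto intro: less_imp_le)
  have "le x1 x2"
  proof (cases "x1 = bot")
    case True then show ?thesis using bot_le good_props(2)[OF 2(2)] by simp
  next
    case False
    then have "gv t1 x1 > 0" using gp_x[OF 1(2)] 1(1) by simp
    then have "V C1 m1 x1 > 0" using V_pos[OF assms(1) nn assms(5)] assms(3,5) by blast
    then have "V C2 m2 x1 \<noteq> 0" using assms(4) by simp
    then obtain v where v: "v \<in> C2" "gv v x1 \<noteq> 0" using V_nz by blast
    then obtain x y where xy: "v = Some (x, y)" "good x y" using assms(7) by (meson BP_SomeE subsetD)
    have "x1 = x" using comp_I[OF xy(2) good_props(1)[OF 1(2)]] v xy by simp
    moreover have "BL v t2" using assms(8) v by blast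
    ultimately show ?thesis using xy 2 by simp
  qed
  moreover have "le y2 y1"
  proof (cases "y1 = top")
    case True then show ?thesis using le_top good_props(3)[OF 2(2)] by simp
  next
    case False
    then have "gv t1 y1 > 0" using gp_y[OF 1(2)] 1(1) by simp
    then have "V C1 m1 y1 > 0" using V_pos[OF assms(1) nn assms(5)] assms(3,5) by blast
    then have "V C2 m2 y1 \<noteq> 0" using assms(4) by simp
    then obtain v where v: "v \<in> C2" "gv v y1 \<noteq> 0" using V_nz by blast
    then obtain x y where xy: "v = Some (x, y)" "good x y" using assms(7) by (meson BP_SomeE subsetD)
    have "y1 = y" using comp_nI[OF xy(2) good_props(4)[OF 1(2)]] v xy by simp
    moreover have "BL v t2" using assms(8) v by blast
    ultimately show ?thesis using xy 2 by simp
  qed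
  ultimately show ?thesis using 1 2 by simp
qed

lemma chain_top_BP:
  assumes "finite C" "C \<noteq> {}" "C \<subseteq> BP" "is_chain C BL"
  shows "\<exists>t\<in>C. \<forall>v\<in>C. BL v t"
proof (rule chain_has_top[OF assms(1,2,4)])
  show "\<forall>a\<in>C. \<forall>b\<in>C. \<forall>c\<in>C. BL a b \<and> BL b c \<longrightarrow> BL a c"
    using BL_trans assms(3) by blast
qed

lemma peel:
  assumes "finite C" "C \<subseteq> BP" "is_chain C BL" "\<forall>v\<in>C. m v > 0" "\<forall>v. v \<notin> C \<longrightarrow> m v = 0"
    and "t \<in> C" "0 < w" "w \<le> m t"
  defines "C' \<equiv> (if m t = w then C - {t} else C)" and "m' \<equiv> m(t := m t - w)"
  shows "finite C'" "C' \<subseteq> BP" "is_chain C' BL" "\<forall>v\<in>C'. m' v > 0" "\<forall>v. v \<notin> C' \<longrightarrow> m' v = 0"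
    "V C' m' = (\<lambda>z. V C m z - w * gv t z)" "card C' \<le> card C" "m t = w \<Longrightarrow> card C' < card C"
proof -
  have sub: "C' \<subseteq> C" by (auto simp: C'_def)
  show "finite C'" using assms(1) sub by (rule finite_subset[rotated])
  show "C' \<subseteq> BP" using assms(2) sub by blast
  show "is_chain C' BL" using assms(3) sub unfolding is_chain_def by blast
  show "\<forall>v\<in>C'. m' v > 0" using assms(4,8) by (auto simp: C'_def m'_def)
  show "\<forall>v. v \<notin> C' \<longrightarrow> m' v = 0" using assms(5,6) by (auto simp: C'_def m'_def)
  show "card C' \<le> card C" using sub assms(1) by (rule card_mono[rotated])
  show "card C' < card C" if "m t = w"
  proof -
    have "C' = C - {t}" using that by (simp add: C'_def)
    then show ?thesis using card_Diff1_less[OF assms(1,6)] by simp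
  qed
  show "V C' m' = (\<lambda>z. V C m z - w * gv t z)"
  proof
    fix z
    have rem: "V C m z = m t * gv t z + (\<Sum>v\<in>C - {t}. m v * gv v z)"
      unfolding V_def using sum.remove[OF assms(1,6)] by blast
    have rem2: "(\<Sum>v\<in>C - {t}. m' v * gv v z) = (\<Sum>v\<in>C - {t}. m v * gv v z)"
      by (rule sum.cong) (auto simp: m'_def)
    show "V C' m' z = V C m z - w * gv t z"
    proof (cases "m t = w")
      case True
      then have "V C' m' z = (\<Sum>v\<in>C - {t}. m' v * gv v z)" by (simp add: C'_def V_def)
      then show ?thesis using rem rem2 True by simp
    next
      case False
      then have "V C' m' z = m' t * gv t z + (\<Sum>v\<in>C - {t}. m' v * gv v z)"
        unfolding C'_def V_def using sum.remove[OF assms(1,6)] by simp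
      then show ?thesis using rem rem2 by (simp add: m'_def algebra_simps)
    qed
  qed
qed

lemma uniq_aux:
  "card C1 + card C2 = n \<Longrightarrow> finite C1 \<Longrightarrow> finite C2 \<Longrightarrow> C1 \<subseteq> BP \<Longrightarrow> C2 \<subseteq> BP \<Longrightarrow>
   is_chain C1 BL \<Longrightarrow> is_chain C2 BL \<Longrightarrow> \<forall>v\<in>C1. m1 v > 0 \<Longrightarrow> \<forall>v\<in>C2. m2 v > 0 \<Longrightarrow>
   \<forall>v. v \<notin> C1 \<longrightarrow> m1 v = 0 \<Longrightarrow> \<forall>v. v \<notin> C2 \<longrightarrow> m2 v = 0 \<Longrightarrow> V C1 m1 = V C2 m2 \<Longrightarrow> m1 = m2"
proof (induction n arbitrary: C1 C2 m1 m2 rule: less_induct)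
  case (less n)
  show ?case
  proof (cases "C1 = {} \<or> C2 = {}")
    case True
    then have "C1 = {} \<and> C2 = {}"
    proof
      assume "C1 = {}"
      then have "V C2 m2 = (\<lambda>z. 0)" using less.prems(12) V_empty by simp
      then show ?thesis using V_zero_empty less.prems \<open>C1 = {}\<close> by blast
    next
      assume "C2 = {}"
      then have "V C1 m1 = (\<lambda>z. 0)" using less.prems(12) V_empty by simp
      then show ?thesis using V_zero_empty less.prems \<open>C2 = {}\<close> by blast
    qed
    then show ?thesis using less.prems(10,11) by (auto simp: fun_eq_iff)
  next
    case False
    then have ne: "C1 \<noteq> {}" "C2 \<noteq> {}" by auto
    obtain t1 where t1: "t1 \<in> C1" "\<forall>v\<in>C1. BL v t1"
      using chain_top_BP[OF less.prems(2) ne(1) less.prems(4,6)] by blast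
    obtain t2 where t2: "t2 \<in> C2" "\<forall>v\<in>C2. BL v t2"
      using chain_top_BP[OF less.prems(3) ne(2) less.prems(5,7)] by blast
    have t1B: "t1 \<in> BP" and t2B: "t2 \<in> BP" using t1 t2 less.prems(4,5) by auto
    have "BL t1 t2"
      using top_BL[OF less.prems(2,4,8,12) t1(1) t2B less.prems(5) t2(2)] .
    moreover have "BL t2 t1"
      using top_BL[OF less.prems(3,5,9) less.prems(12)[symmetric] t2(1) t1B less.prems(4) t1(2)] .
    ultimately have tt: "t1 = t2" using BL_antisym t1B t2B by blast
    define t where "t = t1"
    have tC1: "t \<in> C1" and tC2: "t \<in> C2" using t1 t2 tt by (auto simp: t_def)
    define w where "w = min (m1 t) (m2 t)"
    have w0: "0 < w" using less.prems(8,9) tC1 tC2 by (simp add: w_def)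
    have w1: "w \<le> m1 t" and w2: "w \<le> m2 t" by (auto simp: w_def)
    define C1' where "C1' = (if m1 t = w then C1 - {t} else C1)"
    define m1' where "m1' = m1(t := m1 t - w)"
    define C2' where "C2' = (if m2 t = w then C2 - {t} else C2)"
    define m2' where "m2' = m2(t := m2 t - w)"
    note p1 = peel[OF less.prems(2,4,6,8,10) tC1 w0 w1, folded C1'_def m1'_def]
    note p2 = peel[OF less.prems(3,5,7,9,11) tC2 w0 w2, folded C2'_def m2'_def]
    have "m1 t = w \<or> m2 t = w" by (auto simp: w_def min_def)
    then have lt: "card C1' + card C2' < n"
      using p1(7,8) p2(7,8) less.prems(1) by linarith
    have "V C1' m1' = V C2' m2'" using p1(6) p2(6) less.prems(12) by simp
    then have "m1' = m2'"
      using less.IH[OF lt HOL.refl p1(1) p2(1) p1(2) p2(2) p1(3) p2(3) p1(4) p2(4) p1(5) p2(5)] by blast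
    then show ?thesis
    proof -
      assume eq: "m1' = m2'"
      show "m1 = m2"
      proof
        fix v
        show "m1 v = m2 v"
        proof (cases "v = t")
          case True
          have "m1' t = m2' t" using eq by simp
          then show ?thesis using True by (simp add: m1'_def m2'_def)
        next
          case False
          have "m1' v = m2' v" using eq by simp
          then show ?thesis using False by (simp add: m1'_def m2'_def)
        qed
      qed
    qed
  qed
qed

end



context bier_setup
begin

lemma add_vertex:
  assumes "finite C" "C \<subseteq> BP" "is_chain C BL" "\<forall>v\<in>C. m v > 0" "\<forall>v. v \<notin> C \<longrightarrow> m v = 0"
    "t \<in> BP" "t \<notin> C" "\<forall>v\<in>C. BL v t" "w > 0"
  shows "finite (insert t C)" "insert t C \<subseteq> BP" "is_chain (insert t C) BL"
    "\<forall>v\<in>insert t C. (m(t:=w)) v > 0" "\<forall>v. v \<notin> insert t C \<longrightarrow> (m(t:=w)) v = 0"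
    "V (insert t C) (m(t:=w)) = (\<lambda>z. V C m z + w * gv t z)"
proof -
  show "finite (insert t C)" using assms(1) by simp
  show "insert t C \<subseteq> BP" using assms(2,6) by simp
  show "is_chain (insert t C) BL"
    unfolding is_chain_def
  proof (intro ballI)
    fix u v assume u: "u \<in> insert t C" and v: "v \<in> insert t C"
    show "BL u v \<or> BL v u"
    proof (cases "u = t")
      case True
      show ?thesis
      proof (cases "v = t")
        case True then show ?thesis using \<open>u = t\<close> BL_refl assms(6) by simp
      next
        case False then have "v \<in> C" using v by simp
        then show ?thesis using assms(8) True by blast
      qed
    next
      case False
      then have uC: "u \<in> C" using u by simp
      show ?thesis
      proof (cases "v = t")
        case True then show ?thesis using assms(8) uC by blast
      next
        case False then have "v \<in> C" using v by simp
        then show ?thesis using assms(3) uC unfolding is_chain_def by blast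
      qed
    qed
  qed
  show "\<forall>v\<in>insert t C. (m(t:=w)) v > 0" using assms(4,9) by simp
  show "\<forall>v. v \<notin> insert t C \<longrightarrow> (m(t:=w)) v = 0" using assms(5) by simp
  show "V (insert t C) (m(t:=w)) = (\<lambda>z. V C m z + w * gv t z)"
  proof
    fix z
    have "V (insert t C) (m(t:=w)) z = (m(t:=w)) t * gv t z + (\<Sum>v\<in>C. (m(t:=w)) v * gv v z)"
      unfolding V_def by (rule sum.insert[OF assms(1,7)])
    also have "(m(t:=w)) t = w" by simp
    also have "(\<Sum>v\<in>C. (m(t:=w)) v * gv v z) = V C m z"
      unfolding V_def by (rule sum.cong) (use assms(7) in auto)
    finally show "V (insert t C) (m(t:=w)) z = V C m z + w * gv t z" by linarith
  qed
qed

definition rep :: "('a \<Rightarrow> real) \<Rightarrow> ('a \<times> 'a) option set \<Rightarrow> (('a \<times> 'a) option \<Rightarrow> real) \<Rightarrow> bool" where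
  "rep p C m \<longleftrightarrow> finite C \<and> C \<subseteq> BP \<and> is_chain C BL \<and> (\<forall>v\<in>C. m v > 0) \<and> (\<forall>v. v \<notin> C \<longrightarrow> m v = 0)
     \<and> (\<forall>x y. Some (x, y) \<in> C \<longrightarrow> (x = bot \<or> p x \<noteq> 0) \<and> (y = top \<or> p y \<noteq> 0)) \<and> V C m = p"

lemma step:
  assumes R: "rep p' C m"
    and t: "t = Some (a, b)" "good a b" and w: "w > 0" and p: "p = (\<lambda>z. p' z + w * gv t z)"
    and supp: "\<forall>z. p' z \<noteq> 0 \<longrightarrow> p z \<noteq> 0"
    and nc: "\<not> ((a = bot \<or> p' a \<noteq> 0) \<and> (b = top \<or> p' b \<noteq> 0))"
    and ct: "(a = bot \<or> p a \<noteq> 0) \<and> (b = top \<or> p b \<noteq> 0)"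
    and lec: "\<forall>x y. good x y \<longrightarrow> (x = bot \<or> p' x \<noteq> 0) \<longrightarrow> (y = top \<or> p' y \<noteq> 0) \<longrightarrow> le x a \<and> le b y"
  shows "\<exists>C m. rep p C m"
proof -
  have r: "finite C" "C \<subseteq> BP" "is_chain C BL" "\<forall>v\<in>C. m v > 0" "\<forall>v. v \<notin> C \<longrightarrow> m v = 0"
    "\<forall>x y. Some (x, y) \<in> C \<longrightarrow> (x = bot \<or> p' x \<noteq> 0) \<and> (y = top \<or> p' y \<noteq> 0)" "V C m = p'"
    using R unfolding rep_def by blast+
  have tB: "t \<in> BP" using t BP_char by blast
  have tC: "t \<notin> C" using r(6) nc t by blast
  have BLt: "\<forall>v\<in>C. BL v t"
  proof
    fix v assume v: "v \<in> C"
    then obtain x y where xy: "v = Some (x, y)" "good x y" using r(2) by (meson BP_SomeE subsetD)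
    then have "(x = bot \<or> p' x \<noteq> 0) \<and> (y = top \<or> p' y \<noteq> 0)" using r(6) v by blast
    then have "le x a \<and> le b y" using lec xy(2) by blast
    then show "BL v t" using xy t by simp
  qed
  note av = add_vertex[OF r(1-5) tB tC BLt w]
  have "rep p (insert t C) (m(t:=w))"
    unfolding rep_def
  proof (intro conjI)
    show "\<forall>x y. Some (x, y) \<in> insert t C \<longrightarrow> (x = bot \<or> p x \<noteq> 0) \<and> (y = top \<or> p y \<noteq> 0)"
    proof (intro allI impI)
      fix x y assume "Some (x, y) \<in> insert t C"
      then consider "Some (x, y) = t" | "Some (x, y) \<in> C" by blast
      then show "(x = bot \<or> p x \<noteq> 0) \<and> (y = top \<or> p y \<noteq> 0)"
      proof cases
        case 1 then show ?thesis using ct t by simp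
      next
        case 2 then show ?thesis using r(6) supp by blast
      qed
    qed
    show "V (insert t C) (m(t := w)) = p" using av(6) r(7) p by simp
  qed (use av in auto)
  then show ?thesis by blast
qed

lemma exist_aux:
  assumes S: "finite S" "S \<subseteq> proper_part P le" "is_chain S le"
  shows "card {z\<in>S. p z \<noteq> 0} = n \<Longrightarrow> \<forall>z. p z \<ge> 0 \<Longrightarrow> \<forall>z. z \<notin> S \<longrightarrow> p z = 0 \<Longrightarrow> \<exists>C m. rep p C m"
proof (induction n arbitrary: p rule: less_induct)
  case (less n)
  have SP: "\<And>z. z \<in> S \<Longrightarrow> z \<in> P \<and> z \<noteq> bot \<and> z \<noteq> top" using S(2) pp_P by blast
  define A where "A = {z\<in>S. p z \<noteq> 0 \<and> z \<in> I}"
  define B where "B = {z\<in>S. p z \<noteq> 0 \<and> z \<notin> I}"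
  have finA: "finite A" and finB: "finite B" using S(1) by (auto simp: A_def B_def)
  have chA: "is_chain A le" and chB: "is_chain B (\<lambda>u v. le v u)"
    using S(3) unfolding is_chain_def A_def B_def by blast+
  have trA: "\<forall>a\<in>A. \<forall>b\<in>A. \<forall>c\<in>A. le a b \<and> le b c \<longrightarrow> le a c"
    using trans SP unfolding A_def by blast
  have trB: "\<forall>a\<in>B. \<forall>b\<in>B. \<forall>c\<in>B. le b a \<and> le c b \<longrightarrow> le c a"
    using trans SP unfolding B_def by blast
  have suppS: "\<And>z. p z \<noteq> 0 \<Longrightarrow> z \<in> S" using less.prems(3) by blast
  have pn: "\<And>z. 0 \<le> p z" using less.prems(2) by blast
  have card_lt: "card {z\<in>S. q z \<noteq> 0} < n"
    if "\<forall>z. q z \<noteq> 0 \<longrightarrow> p z \<noteq> 0" "c \<in> S" "p c \<noteq> 0" "q c = 0" for q c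
  proof -
    have "{z\<in>S. q z \<noteq> 0} \<subset> {z\<in>S. p z \<noteq> 0}" using that by blast
    moreover have "finite {z\<in>S. p z \<noteq> 0}" using S(1) by simp
    ultimately have "card {z\<in>S. q z \<noteq> 0} < card {z\<in>S. p z \<noteq> 0}" by (simp add: psubset_card_mono)
    then show ?thesis using less.prems(1) by simp
  qed
  have good_ab: "good a b" if "a \<in> A" "b \<in> B" for a b
  proof -
    have "a \<in> I" "b \<in> P" "b \<notin> I" "a \<noteq> bot" using that SP unfolding A_def B_def by auto
    moreover have "le a b"
    proof -
      have "le a b \<or> le b a" using S(3) that unfolding is_chain_def A_def B_def by blast
      then show ?thesis using I_down[of a b] \<open>a \<in> I\<close> \<open>b \<in> P\<close> \<open>b \<notin> I\<close> by blast
    qed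
    ultimately show ?thesis by (simp add: good_def)
  qed
  show ?case
  proof (cases "A = {}")
    case Aempty: True
    show ?thesis
    proof (cases "B = {}")
      case True
      have p0: "p = (\<lambda>z. 0)"
      proof
        fix z show "p z = 0" using suppS[of z] Aempty True unfolding A_def B_def by blast
      qed
      have "rep p {} (\<lambda>_. 0)" unfolding rep_def using p0 V_empty by (simp add: is_chain_def)
      then show ?thesis by blast
    next
      case False
      obtain b where b: "b \<in> B" "\<forall>v\<in>B. le b v"
        using chain_has_top[OF finB False chB trB] by blast
      have bS: "b \<in> S" "p b \<noteq> 0" "b \<notin> I" "b \<in> P" "b \<noteq> top" using b(1) SP unfolding B_def by auto
      define p' where "p' = p(b := 0)"
      have gb: "good bot b" using bot_I bS bot_le unfolding good_def by blast
      have gpb: "gp bot b = (\<lambda>z. if z = b then 1 else 0)"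
        using bS(5) bot_ne_top good_props(6)[OF gb] by (auto simp: fun_eq_iff gp_def cx_def cy_def)
      have supp': "\<forall>z. p' z \<noteq> 0 \<longrightarrow> p z \<noteq> 0" by (simp add: p'_def)
      have IHr: "\<exists>C m. rep p' C m"
      proof (rule less.IH[OF card_lt[OF supp' bS(1,2)], of p'])
        show "p' b = 0" by (simp add: p'_def)
        show "card {z \<in> S. p' z \<noteq> 0} = card {z \<in> S. p' z \<noteq> 0}" by simp
        show "\<forall>z. 0 \<le> p' z" using pn by (simp add: p'_def)
        show "\<forall>z. z \<notin> S \<longrightarrow> p' z = 0" using less.prems(3) by (simp add: p'_def)
      qed
      then obtain C m where R: "rep p' C m" by blast
      show ?thesis
      proof (rule step[OF R HOL.refl gb, of "p b"])
        show "0 < p b" using pn[of b] bS(2) by simp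
        show "p = (\<lambda>z. p' z + p b * gv (Some (bot, b)) z)" using gpb by (auto simp: fun_eq_iff p'_def)
        show "\<forall>z. p' z \<noteq> 0 \<longrightarrow> p z \<noteq> 0" by (rule supp')
        show "\<not> ((bot = bot \<or> p' bot \<noteq> 0) \<and> (b = top \<or> p' b \<noteq> 0))" using bS(5) by (simp add: p'_def)
        show "(bot = bot \<or> p bot \<noteq> 0) \<and> (b = top \<or> p b \<noteq> 0)" using bS(2) by simp
        show "\<forall>x y. good x y \<longrightarrow> (x = bot \<or> p' x \<noteq> 0) \<longrightarrow> (y = top \<or> p' y \<noteq> 0) \<longrightarrow> le x bot \<and> le b y"
        proof (intro allI impI)
          fix x y assume g: "good x y" and hx: "x = bot \<or> p' x \<noteq> 0" and hy: "y = top \<or> p' y \<noteq> 0"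
          have "x = bot"
          proof (rule ccontr)
            assume "x \<noteq> bot"
            then have "p x \<noteq> 0" using hx supp' by blast
            then have "x \<in> A" using suppS good_props(1)[OF g] unfolding A_def by blast
            then show False using Aempty by blast
          qed
          moreover have "le b y"
          proof (cases "y = top")
            case True then show ?thesis using le_top bS(4) by simp
          next
            case False
            then have "p y \<noteq> 0" using hy supp' by blast
            then have "y \<in> B" using suppS good_props(4)[OF g] unfolding B_def by blast
            then show ?thesis using b(2) by blast
          qed
          ultimately show "le x bot \<and> le b y" using refl[OF bot_P] by simp
        qed
      qed
    qed
  next
    case Ane: False
    obtain a where a: "a \<in> A" "\<forall>v\<in>A. le v a"
      using chain_has_top[OF finA Ane chA trA] by blast
    have aS: "a \<in> S" "p a \<noteq> 0" "a \<in> I" "a \<in> P" "a \<noteq> bot" using a(1) SP unfolding A_def by auto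
    have lex: "le x a" if g: "good x y" and hx: "x = bot \<or> q x \<noteq> 0" and sq: "\<forall>z. q z \<noteq> 0 \<longrightarrow> p z \<noteq> 0" for x y q
    proof (cases "x = bot")
      case True then show ?thesis using bot_le aS(4) by simp
    next
      case False
      then have "p x \<noteq> 0" using hx sq by blast
      then have "x \<in> A" using suppS good_props(1)[OF g] unfolding A_def by blast
      then show ?thesis using a(2) by blast
    qed
    show ?thesis
    proof (cases "B = {}")
      case True
      define p' where "p' = p(a := 0)"
      have ga: "good a top" using aS top_P top_nI le_top unfolding good_def by blast
      have gpa: "gp a top = (\<lambda>z. if z = a then 1 else 0)"
        using aS(5) good_props(6)[OF ga] by (auto simp: fun_eq_iff gp_def cx_def cy_def)
      have supp': "\<forall>z. p' z \<noteq> 0 \<longrightarrow> p z \<noteq> 0" by (simp add: p'_def)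
      have IHr: "\<exists>C m. rep p' C m"
      proof (rule less.IH[OF card_lt[OF supp' aS(1,2)], of p'])
        show "p' a = 0" by (simp add: p'_def)
        show "card {z \<in> S. p' z \<noteq> 0} = card {z \<in> S. p' z \<noteq> 0}" by simp
        show "\<forall>z. 0 \<le> p' z" using pn by (simp add: p'_def)
        show "\<forall>z. z \<notin> S \<longrightarrow> p' z = 0" using less.prems(3) by (simp add: p'_def)
      qed
      then obtain C m where R: "rep p' C m" by blast
      show ?thesis
      proof (rule step[OF R HOL.refl ga, of "p a"])
        show "0 < p a" using pn[of a] aS(2) by simp
        show "p = (\<lambda>z. p' z + p a * gv (Some (a, top)) z)" using gpa by (auto simp: fun_eq_iff p'_def)
        show "\<forall>z. p' z \<noteq> 0 \<longrightarrow> p z \<noteq> 0" by (rule supp')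
        show "\<not> ((a = bot \<or> p' a \<noteq> 0) \<and> (top = top \<or> p' top \<noteq> 0))" using aS(5) by (simp add: p'_def)
        show "(a = bot \<or> p a \<noteq> 0) \<and> (top = top \<or> p top \<noteq> 0)" using aS(2) by simp
        show "\<forall>x y. good x y \<longrightarrow> (x = bot \<or> p' x \<noteq> 0) \<longrightarrow> (y = top \<or> p' y \<noteq> 0) \<longrightarrow> le x a \<and> le top y"
        proof (intro allI impI)
          fix x y assume g: "good x y" and hx: "x = bot \<or> p' x \<noteq> 0" and hy: "y = top \<or> p' y \<noteq> 0"
          have "y = top"
          proof (rule ccontr)
            assume "y \<noteq> top"
            then have "p y \<noteq> 0" using hy supp' by blast
            then have "y \<in> B" using suppS good_props(4)[OF g] unfolding B_def by blast
            then show False using True by blast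
          qed
          then show "le x a \<and> le top y" using lex[OF g hx supp'] refl[OF top_P] by simp
        qed
      qed
    next
      case Bne: False
      obtain b where b: "b \<in> B" "\<forall>v\<in>B. le b v"
        using chain_has_top[OF finB Bne chB trB] by blast
      have bS: "b \<in> S" "p b \<noteq> 0" "b \<notin> I" "b \<in> P" "b \<noteq> top" using b(1) SP unfolding B_def by auto
      have gab: "good a b" using good_ab a(1) b(1) .
      have ab: "a \<noteq> b" using aS(3) bS(3) by blast
      define w where "w = min (p a) (p b)"
      define p' where "p' = p(a := p a - w, b := p b - w)"
      have w0: "0 < w" using pn[of a] pn[of b] aS(2) bS(2) by (simp add: w_def)
      have gpab: "gp a b = (\<lambda>z. (if z = a then 1/2 else 0) + (if z = b then 1/2 else 0))"
        using aS(5) bS(5) by (auto simp: fun_eq_iff gp_def cx_def cy_def)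
      have supp': "\<forall>z. p' z \<noteq> 0 \<longrightarrow> p z \<noteq> 0" using aS(2) bS(2) by (simp add: p'_def)
      have zero: "p' a = 0 \<or> p' b = 0" using ab by (auto simp: p'_def w_def min_def)
      have IHr: "\<exists>C m. rep p' C m"
      proof -
        have lt: "card {z\<in>S. p' z \<noteq> 0} < n"
          using zero card_lt[OF supp' aS(1,2)] card_lt[OF supp' bS(1,2)] by blast
        show ?thesis
        proof (rule less.IH[OF lt])
          show "card {z \<in> S. p' z \<noteq> 0} = card {z \<in> S. p' z \<noteq> 0}" by simp
          show "\<forall>z. 0 \<le> p' z" using pn ab by (simp add: p'_def w_def)
          show "\<forall>z. z \<notin> S \<longrightarrow> p' z = 0" using less.prems(3) aS(1) bS(1) by (auto simp: p'_def)
        qed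
      qed
      then obtain C m where R: "rep p' C m" by blast
      show ?thesis
      proof (rule step[OF R HOL.refl gab, of "2 * w"])
        show "0 < 2 * w" using w0 by simp
        show "p = (\<lambda>z. p' z + 2 * w * gv (Some (a, b)) z)" using gpab ab by (auto simp: fun_eq_iff p'_def)
        show "\<forall>z. p' z \<noteq> 0 \<longrightarrow> p z \<noteq> 0" by (rule supp')
        show "\<not> ((a = bot \<or> p' a \<noteq> 0) \<and> (b = top \<or> p' b \<noteq> 0))" using aS(5) bS(5) zero by blast
        show "(a = bot \<or> p a \<noteq> 0) \<and> (b = top \<or> p b \<noteq> 0)" using aS(2) bS(2) by simp
        show "\<forall>x y. good x y \<longrightarrow> (x = bot \<or> p' x \<noteq> 0) \<longrightarrow> (y = top \<or> p' y \<noteq> 0) \<longrightarrow> le x a \<and> le b y"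
        proof (intro allI impI)
          fix x y assume g: "good x y" and hx: "x = bot \<or> p' x \<noteq> 0" and hy: "y = top \<or> p' y \<noteq> 0"
          have "le b y"
          proof (cases "y = top")
            case True then show ?thesis using le_top bS(4) by simp
          next
            case False
            then have "p y \<noteq> 0" using hy supp' by blast
            then have "y \<in> B" using suppS good_props(4)[OF g] unfolding B_def by blast
            then show ?thesis using b(2) by blast
          qed
          then show "le x a \<and> le b y" using lex[OF g hx supp'] by simp
        qed
      qed
    qed
  qed
qed

end



context bier_setup
begin

abbreviation "KB \<equiv> order_complex BP BL"
abbreviation "LP \<equiv> order_complex (proper_part P le) le"

lemma KB_facts: "c \<in> KB \<Longrightarrow> finite c \<and> c \<noteq> {} \<and> c \<subseteq> BP \<and> is_chain c BL"
  by (auto simp: order_complex_def)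

lemma gv_supp:
  assumes "v \<in> BP" "gv v z \<noteq> 0" shows "z \<in> proper_part P le"
proof -
  obtain x y where xy: "v = Some (x, y)" "good x y" using assms(1) by (rule BP_SomeE)
  then have "(z = x \<and> x \<noteq> bot) \<or> (z = y \<and> y \<noteq> top)" using gp_nz assms(2) by simp
  then show ?thesis
  proof
    assume "z = x \<and> x \<noteq> bot"
    moreover have "x \<noteq> top" using good_props(1)[OF xy(2)] top_nI by blast
    ultimately show ?thesis using pp_P good_props(2)[OF xy(2)] by blast
  next
    assume "z = y \<and> y \<noteq> top"
    moreover have "y \<noteq> bot" using good_props(4)[OF xy(2)] bot_I by blast
    ultimately show ?thesis using pp_P good_props(3)[OF xy(2)] by blast
  qed
qed

lemma gv_eq_x:
  assumes "gv (Some (x1, y1)) = gv (Some (x2, y2))" "good x1 y1" "good x2 y2" "x1 \<noteq> bot"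
  shows "x1 = x2"
proof -
  have "gp x1 y1 x1 > 0" using gp_x[OF assms(2,4)] .
  then have "gp x2 y2 x1 \<noteq> 0" using assms(1) by simp
  then show ?thesis using comp_I[OF assms(3) good_props(1)[OF assms(2)]] by simp
qed

lemma gv_eq_y:
  assumes "gv (Some (x1, y1)) = gv (Some (x2, y2))" "good x1 y1" "good x2 y2" "y1 \<noteq> top"
  shows "y1 = y2"
proof -
  have "gp x1 y1 y1 > 0" using gp_y[OF assms(2,4)] .
  then have "gp x2 y2 y1 \<noteq> 0" using assms(1) by simp
  then show ?thesis using comp_nI[OF assms(3) good_props(4)[OF assms(2)]] by simp
qed

lemma gv_inj: "inj_on gv BP"
proof (rule inj_onI)
  fix u v assume u: "u \<in> BP" and v: "v \<in> BP" and eq: "gv u = gv v"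
  obtain x1 y1 where 1: "u = Some (x1, y1)" "good x1 y1" using u by (rule BP_SomeE)
  obtain x2 y2 where 2: "v = Some (x2, y2)" "good x2 y2" using v by (rule BP_SomeE)
  have e1: "gv (Some (x1, y1)) = gv (Some (x2, y2))" and e2: "gv (Some (x2, y2)) = gv (Some (x1, y1))"
    using eq 1 2 by simp_all
  have "x1 = x2"
  proof (cases "x1 = bot")
    case True
    show ?thesis
    proof (rule ccontr)
      assume "x1 \<noteq> x2"
      then have "x2 \<noteq> bot" using True by simp
      then have "x2 = x1" using gv_eq_x[OF e2 2(2) 1(2)] by simp
      then show False using \<open>x1 \<noteq> x2\<close> by simp
    qed
  next
    case False then show ?thesis using gv_eq_x[OF e1 1(2) 2(2)] by simp
  qed
  moreover have "y1 = y2"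
  proof (cases "y1 = top")
    case True
    show ?thesis
    proof (rule ccontr)
      assume "y1 \<noteq> y2"
      then have "y2 \<noteq> top" using True by simp
      then have "y2 = y1" using gv_eq_y[OF e2 2(2) 1(2)] by simp
      then show False using \<open>y1 \<noteq> y2\<close> by simp
    qed
  next
    case False then show ?thesis using gv_eq_y[OF e1 1(2) 2(2)] by simp
  qed
  ultimately show "u = v" using 1 2 by simp
qed

lemma supp_chain:
  assumes "v1 \<in> BP" "v2 \<in> BP" "BL v1 v2" "gv v1 z1 \<noteq> 0" "gv v2 z2 \<noteq> 0"
  shows "le z1 z2 \<or> le z2 z1"
proof -
  obtain x1 y1 where 1: "v1 = Some (x1, y1)" "good x1 y1" using assms(1) by (rule BP_SomeE)
  obtain x2 y2 where 2: "v2 = Some (x2, y2)" "good x2 y2" using assms(2) by (rule BP_SomeE)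
  have l: "le x1 x2" "le y2 y1" using assms(3) 1 2 by auto
  have g: "le x1 y1" "le x2 y2" "x1 \<in> P" "y1 \<in> P" "x2 \<in> P" "y2 \<in> P" using good_props 1(2) 2(2) by auto
  have z1: "z1 = x1 \<or> z1 = y1" using gp_nz[OF 1(2)] assms(4) 1(1) by auto
  have z2: "z2 = x2 \<or> z2 = y2" using gp_nz[OF 2(2)] assms(5) 2(1) by auto
  have "le x1 y2" using trans[of x1 x2 y2] g l by blast
  moreover have "le x2 y1" using trans[of x2 y2 y1] g l by blast
  moreover have "le x1 x1" "le y1 y1" using refl g by auto
  ultimately show ?thesis using z1 z2 l g by blast
qed

definition supc :: "('a \<times> 'a) option set \<Rightarrow> 'a set" where
  "supc c = {z. \<exists>v\<in>c. gv v z \<noteq> 0}"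

lemma supc_L: assumes "c \<in> KB" shows "supc c \<in> LP"
proof -
  have c: "finite c" "c \<noteq> {}" "c \<subseteq> BP" "is_chain c BL" using KB_facts[OF assms] by auto
  have eq: "supc c = (\<Union>v\<in>c. {z. gv v z \<noteq> 0})" by (auto simp: supc_def)
  have fin1: "finite {z. gv v z \<noteq> 0}" if vc: "v \<in> c" for v
  proof -
    obtain x y where xy: "v = Some (x, y)" "good x y" using vc c(3) by (meson BP_SomeE subsetD)
    have "{z. gv v z \<noteq> 0} \<subseteq> {x, y}" using gp_nz[OF xy(2)] xy(1) by auto
    then show ?thesis by (rule finite_subset) simp
  qed
  have "finite (supc c)" unfolding eq using c(1) fin1 by blast
  moreover have "supc c \<noteq> {}"
  proof -
    obtain v where "v \<in> c" using c(2) by blast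
    then obtain z where "gv v z > 0" using pos_exists c(3) by blast
    then have "gv v z \<noteq> 0" by simp
    then have "z \<in> supc c" unfolding supc_def using \<open>v \<in> c\<close> by blast
    then show ?thesis by blast
  qed
  moreover have "supc c \<subseteq> proper_part P le" using gv_supp c(3) by (auto simp: supc_def)
  moreover have "is_chain (supc c) le"
    unfolding is_chain_def
  proof (intro ballI)
    fix z1 z2 assume "z1 \<in> supc c" "z2 \<in> supc c"
    then obtain v1 v2 where v: "v1 \<in> c" "gv v1 z1 \<noteq> 0" "v2 \<in> c" "gv v2 z2 \<noteq> 0" by (auto simp: supc_def)
    have "BL v1 v2 \<or> BL v2 v1" using c(4) v unfolding is_chain_def by blast
    then show "le z1 z2 \<or> le z2 z1" using supp_chain v c(3) by blast
  qed
  ultimately show ?thesis by (simp add: order_complex_def)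
qed

lemma lin_ext_V:
  assumes "c \<in> KB" "f \<in> face_simplex (gv ` c)"
  shows "lin_ext f = V c (\<lambda>v. f (gv v))"
proof
  fix z
  have c: "finite c" "c \<subseteq> BP" using KB_facts[OF assms(1)] by auto
  have inj: "inj_on gv c" using gv_inj c(2) by (rule inj_on_subset)
  have sub: "{p. f p \<noteq> 0} \<subseteq> gv ` c" using assms(2) by (auto simp: face_simplex_def)
  have "lin_ext f z = (\<Sum>p\<in>{p. f p \<noteq> 0}. f p * p z)" by (simp add: lin_ext_def)
  also have "\<dots> = (\<Sum>p\<in>gv ` c. f p * p z)"
    by (rule sum.mono_neutral_left) (use c(1) sub in auto)
  also have "\<dots> = (\<Sum>v\<in>c. f (gv v) * gv v z)"
    using sum.reindex[OF inj, of "\<lambda>p. f p * p z"] by simp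
  finally show "lin_ext f z = V c (\<lambda>v. f (gv v)) z" by (simp add: V_def)
qed

lemma img_in:
  assumes "c \<in> KB" "f \<in> face_simplex (gv ` c)" "finite S" "\<forall>v\<in>c. \<forall>z. gv v z \<noteq> 0 \<longrightarrow> z \<in> S"
  shows "lin_ext f \<in> face_simplex S"
proof -
  have c: "finite c" "c \<subseteq> BP" using KB_facts[OF assms(1)] by auto
  have inj: "inj_on gv c" using gv_inj c(2) by (rule inj_on_subset)
  have le: "lin_ext f = (\<lambda>z. \<Sum>v\<in>c. f (gv v) * gv v z)" using lin_ext_V[OF assms(1,2)] by (simp add: V_def fun_eq_iff)
  have fn: "\<And>p. 0 \<le> f p" using assms(2) by (simp add: face_simplex_def)
  have "\<forall>z. 0 \<le> lin_ext f z" unfolding le using fn gv_nonneg by (simp add: sum_nonneg)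
  moreover have "\<forall>z. z \<notin> S \<longrightarrow> lin_ext f z = 0"
  proof (intro allI impI)
    fix z assume "z \<notin> S"
    then have "\<forall>v\<in>c. gv v z = 0" using assms(4) by blast
    then show "lin_ext f z = 0" unfolding le by simp
  qed
  moreover have "sum (lin_ext f) S = 1"
  proof -
    have "sum (lin_ext f) S = (\<Sum>z\<in>S. \<Sum>v\<in>c. f (gv v) * gv v z)" unfolding le by simp
    also have "\<dots> = (\<Sum>v\<in>c. \<Sum>z\<in>S. f (gv v) * gv v z)" by (rule sum.swap)
    also have "\<dots> = (\<Sum>v\<in>c. f (gv v) * (\<Sum>z\<in>S. gv v z))" by (simp add: sum_distrib_left)
    also have "\<dots> = (\<Sum>v\<in>c. f (gv v))"
    proof (rule sum.cong)
      fix v assume v: "v \<in> c"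
      obtain x y where xy: "v = Some (x, y)" "good x y" using v c(2) by (meson BP_SomeE subsetD)
      have "sum (gp x y) S = 1" using gp_mass[OF xy(2) assms(3)] assms(4) v xy(1) by simp
      then show "f (gv v) * (\<Sum>z\<in>S. gv v z) = f (gv v)" using xy(1) by simp
    qed simp
    also have "\<dots> = sum f (gv ` c)" using sum.reindex[OF inj, of f] by simp
    also have "\<dots> = 1" using assms(2) by (simp add: face_simplex_def)
    finally show ?thesis .
  qed
  ultimately show ?thesis by (simp add: face_simplex_def)
qed

lemma rep_of:
  assumes "c \<in> KB" "f \<in> face_simplex (gv ` c)"
  defines "C \<equiv> {v\<in>c. f (gv v) > 0}" and "m \<equiv> (\<lambda>v. if v \<in> {v\<in>c. f (gv v) > 0} then f (gv v) else 0)"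
  shows "finite C" "C \<subseteq> BP" "is_chain C BL" "\<forall>v\<in>C. m v > 0" "\<forall>v. v \<notin> C \<longrightarrow> m v = 0"
    "V C m = lin_ext f"
proof -
  have c: "finite c" "c \<noteq> {}" "c \<subseteq> BP" "is_chain c BL" using KB_facts[OF assms(1)] by auto
  have sub: "C \<subseteq> c" by (auto simp: C_def)
  show "finite C" using c(1) sub by (rule finite_subset[rotated])
  show "C \<subseteq> BP" using c(3) sub by blast
  show "is_chain C BL" using c(4) sub unfolding is_chain_def by blast
  show "\<forall>v\<in>C. m v > 0" by (auto simp: m_def C_def)
  show "\<forall>v. v \<notin> C \<longrightarrow> m v = 0" by (auto simp: m_def C_def)
  have fn: "\<And>p. 0 \<le> f p" using assms(2) by (simp add: face_simplex_def)
  show "V C m = lin_ext f"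
  proof
    fix z
    have "V c (\<lambda>v. f (gv v)) z = (\<Sum>v\<in>c. f (gv v) * gv v z)" by (simp add: V_def)
    also have "\<dots> = (\<Sum>v\<in>C. f (gv v) * gv v z)"
    proof (rule sum.mono_neutral_right[OF c(1) sub])
      show "\<forall>v\<in>c - C. f (gv v) * gv v z = 0"
      proof
        fix v assume "v \<in> c - C"
        then have "f (gv v) = 0" using fn[of "gv v"] by (auto simp: C_def)
        then show "f (gv v) * gv v z = 0" by simp
      qed
    qed
    also have "\<dots> = V C m z" unfolding V_def by (rule sum.cong) (auto simp: m_def C_def)
    finally show "V C m z = lin_ext f z" using lin_ext_V[OF assms(1,2)] by simp
  qed
qed

lemma pos_transfer:
  assumes "c1 \<in> KB" "f1 \<in> face_simplex (gv ` c1)" "c2 \<in> KB" "f2 \<in> face_simplex (gv ` c2)"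
    and eq: "lin_ext f1 = lin_ext f2" and q: "f1 q > 0"
  shows "f2 q = f1 q"
proof -
  define C1 where "C1 = {v\<in>c1. f1 (gv v) > 0}"
  define C2 where "C2 = {v\<in>c2. f2 (gv v) > 0}"
  note r1 = rep_of[OF assms(1,2), folded C1_def]
  note r2 = rep_of[OF assms(3,4), folded C2_def]
  have meq: "(\<lambda>v. if v \<in> C1 then f1 (gv v) else 0) = (\<lambda>v. if v \<in> C2 then f2 (gv v) else 0)"
    by (rule uniq_aux[OF HOL.refl r1(1) r2(1) r1(2) r2(2) r1(3) r2(3) r1(4) r2(4) r1(5) r2(5)])
      (use r1(6) r2(6) eq in simp)
  have "q \<in> gv ` c1"
  proof (rule ccontr)
    assume "q \<notin> gv ` c1" then have "f1 q = 0" using assms(2) by (simp add: face_simplex_def)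
    then show False using q by simp
  qed
  then obtain v where v: "v \<in> c1" "q = gv v" by blast
  then have "v \<in> C1" using q by (simp add: C1_def)
  have "(if v \<in> C1 then f1 (gv v) else 0) = (if v \<in> C2 then f2 (gv v) else 0)"
    using fun_cong[OF meq, of v] by simp
  then have m2v: "(if v \<in> C2 then f2 (gv v) else 0) = f1 q" using \<open>v \<in> C1\<close> v by simp
  then have "v \<in> C2" using q by (auto split: if_splits)
  then show ?thesis using m2v v by simp
qed

lemma sub_main: "subdivision ((`) gv ` KB) LP"
  unfolding subdivision_def
proof (intro conjI)
  show "simplicial_complex ((`) gv ` KB)" by (rule sc_image[OF sc_order_complex])
  show "\<Union> ((`) gv ` KB) \<subseteq> realization LP"
  proof
    fix p assume "p \<in> \<Union> ((`) gv ` KB)"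
    then obtain c v where cv: "c \<in> KB" "v \<in> c" "p = gv v" by auto
    have vB: "v \<in> BP" using KB_facts[OF cv(1)] cv(2) by blast
    have c1: "{v} \<in> KB" using vB BL_refl by (auto simp: order_complex_def is_chain_def)
    have sL: "supc {v} \<in> LP" by (rule supc_L[OF c1])
    obtain x y where xy: "v = Some (x, y)" "good x y" using vB by (rule BP_SomeE)
    have fin: "finite (supc {v})" using sL by (simp add: order_complex_def)
    have "gv v \<in> face_simplex (supc {v})"
      unfolding face_simplex_def
    proof (intro CollectI conjI allI impI)
      fix z show "0 \<le> gv v z" by (rule gv_nonneg)
    next
      fix z assume "z \<notin> supc {v}" then show "gv v z = 0" by (simp add: supc_def)
    next
      show "sum (gv v) (supc {v}) = 1" using gp_mass[OF xy(2) fin] xy(1) by (simp add: supc_def)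
    qed
    then show "p \<in> realization LP" using sL cv(3) unfolding realization_def by blast
  qed
  show "inj_on lin_ext (realization ((`) gv ` KB))"
  proof (rule inj_onI)
    fix f1 f2 assume f1: "f1 \<in> realization ((`) gv ` KB)" and f2: "f2 \<in> realization ((`) gv ` KB)"
      and eq: "lin_ext f1 = lin_ext f2"
    obtain c1 where c1: "c1 \<in> KB" "f1 \<in> face_simplex (gv ` c1)" using f1 unfolding realization_def by auto
    obtain c2 where c2: "c2 \<in> KB" "f2 \<in> face_simplex (gv ` c2)" using f2 unfolding realization_def by auto
    show "f1 = f2"
    proof
      fix q
      show "f1 q = f2 q"
      proof (cases "f1 q > 0")
        case True then show ?thesis using pos_transfer[OF c1 c2 eq] by simp
      next
        case False
        show ?thesis
        proof (cases "f2 q > 0")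
          case True then show ?thesis using pos_transfer[OF c2 c1 eq[symmetric]] by simp
        next
          case False
          have "0 \<le> f1 q" "0 \<le> f2 q" using c1(2) c2(2) by (auto simp: face_simplex_def)
          then show ?thesis using False \<open>\<not> f1 q > 0\<close> by simp
        qed
      qed
    qed
  qed
  show "\<forall>\<tau>\<in>(`) gv ` KB. \<exists>\<sigma>\<in>LP. lin_ext ` face_simplex \<tau> \<subseteq> face_simplex \<sigma>"
  proof
    fix \<tau> assume "\<tau> \<in> (`) gv ` KB"
    then obtain c where c: "c \<in> KB" "\<tau> = gv ` c" by auto
    have sL: "supc c \<in> LP" by (rule supc_L[OF c(1)])
    have fin: "finite (supc c)" using sL by (simp add: order_complex_def)
    have "lin_ext ` face_simplex \<tau> \<subseteq> face_simplex (supc c)"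
    proof
      fix g assume "g \<in> lin_ext ` face_simplex \<tau>"
      then obtain f where f: "f \<in> face_simplex (gv ` c)" "g = lin_ext f" using c(2) by auto
      show "g \<in> face_simplex (supc c)" using img_in[OF c(1) f(1) fin] f(2) by (auto simp: supc_def)
    qed
    then show "\<exists>\<sigma>\<in>LP. lin_ext ` face_simplex \<tau> \<subseteq> face_simplex \<sigma>" using sL by blast
  qed
  show "\<forall>\<sigma>\<in>LP. \<exists>F. finite F \<and> F \<subseteq> (`) gv ` KB \<and> face_simplex \<sigma> = (\<Union>\<tau>\<in>F. lin_ext ` face_simplex \<tau>)"
  proof
    fix \<sigma> assume \<sigma>L: "\<sigma> \<in> LP"
    have \<sigma>: "finite \<sigma>" "\<sigma> \<noteq> {}" "\<sigma> \<subseteq> proper_part P le" "is_chain \<sigma> le"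
      using \<sigma>L by (auto simp: order_complex_def)
    define W where "W = (\<lambda>(x, y). Some (x, y)) ` (insert bot \<sigma> \<times> insert top \<sigma>)"
    have finW: "finite W" using \<sigma>(1) by (simp add: W_def)
    define F where "F = (`) gv ` {c\<in>KB. c \<subseteq> W}"
    have "finite F" unfolding F_def
    proof (rule finite_imageI)
      show "finite {c\<in>KB. c \<subseteq> W}" by (rule finite_subset[of _ "Pow W"]) (auto simp: finW)
    qed
    moreover have "F \<subseteq> (`) gv ` KB" by (auto simp: F_def)
    moreover have "face_simplex \<sigma> = (\<Union>\<tau>\<in>F. lin_ext ` face_simplex \<tau>)"
    proof
      show "(\<Union>\<tau>\<in>F. lin_ext ` face_simplex \<tau>) \<subseteq> face_simplex \<sigma>"
      proof
        fix g assume "g \<in> (\<Union>\<tau>\<in>F. lin_ext ` face_simplex \<tau>)"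
        then obtain c f where cf: "c \<in> KB" "c \<subseteq> W" "f \<in> face_simplex (gv ` c)" "g = lin_ext f"
          by (auto simp: F_def)
        have "\<forall>v\<in>c. \<forall>z. gv v z \<noteq> 0 \<longrightarrow> z \<in> \<sigma>"
        proof (intro ballI allI impI)
          fix v z assume v: "v \<in> c" and z: "gv v z \<noteq> 0"
          obtain x y where xy: "v = Some (x, y)" "good x y" using v KB_facts[OF cf(1)] by (meson BP_SomeE subsetD)
          have "x \<in> insert bot \<sigma>" "y \<in> insert top \<sigma>" using cf(2) v xy(1) by (auto simp: W_def)
          moreover have "(z = x \<and> x \<noteq> bot) \<or> (z = y \<and> y \<noteq> top)" using gp_nz[OF xy(2)] z xy(1) by simp
          ultimately show "z \<in> \<sigma>" by blast
        qed
        then show "g \<in> face_simplex \<sigma>" using img_in[OF cf(1,3) \<sigma>(1)] cf(4) by simp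
      qed
    next
      show "face_simplex \<sigma> \<subseteq> (\<Union>\<tau>\<in>F. lin_ext ` face_simplex \<tau>)"
      proof
        fix p assume p: "p \<in> face_simplex \<sigma>"
        have pn: "\<forall>z. 0 \<le> p z" and p0: "\<forall>z. z \<notin> \<sigma> \<longrightarrow> p z = 0" and p1: "sum p \<sigma> = 1"
          using p by (auto simp: face_simplex_def)
        obtain C m where R: "rep p C m" using exist_aux[OF \<sigma>(1,3,4) HOL.refl pn p0] by blast
        have r: "finite C" "C \<subseteq> BP" "is_chain C BL" "\<forall>v\<in>C. m v > 0" "\<forall>v. v \<notin> C \<longrightarrow> m v = 0"
          "\<forall>x y. Some (x, y) \<in> C \<longrightarrow> (x = bot \<or> p x \<noteq> 0) \<and> (y = top \<or> p y \<noteq> 0)" "V C m = p"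
          using R unfolding rep_def by blast+
        have inj: "inj_on gv C" using gv_inj r(2) by (rule inj_on_subset)
        have suppC: "\<forall>v\<in>C. \<forall>z. gv v z \<noteq> 0 \<longrightarrow> z \<in> \<sigma>"
        proof (intro ballI allI impI)
          fix v z assume v: "v \<in> C" and z: "gv v z \<noteq> 0"
          obtain x y where xy: "v = Some (x, y)" "good x y" using v r(2) by (meson BP_SomeE subsetD)
          have h: "(x = bot \<or> p x \<noteq> 0) \<and> (y = top \<or> p y \<noteq> 0)" using r(6) v xy(1) by blast
          have "(z = x \<and> x \<noteq> bot) \<or> (z = y \<and> y \<noteq> top)" using gp_nz[OF xy(2)] z xy(1) by simp
          then show "z \<in> \<sigma>" using h p0 by blast
        qed
        have msum: "sum m C = 1"
        proof -
          have "1 = (\<Sum>z\<in>\<sigma>. V C m z)" using p1 r(7) by simp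
          also have "\<dots> = (\<Sum>z\<in>\<sigma>. \<Sum>v\<in>C. m v * gv v z)" by (simp add: V_def)
          also have "\<dots> = (\<Sum>v\<in>C. \<Sum>z\<in>\<sigma>. m v * gv v z)" by (rule sum.swap)
          also have "\<dots> = (\<Sum>v\<in>C. m v * (\<Sum>z\<in>\<sigma>. gv v z))" by (simp add: sum_distrib_left)
          also have "\<dots> = (\<Sum>v\<in>C. m v)"
          proof (rule sum.cong)
            fix v assume v: "v \<in> C"
            obtain x y where xy: "v = Some (x, y)" "good x y" using v r(2) by (meson BP_SomeE subsetD)
            have "sum (gp x y) \<sigma> = 1" using gp_mass[OF xy(2) \<sigma>(1)] suppC v xy(1) by simp
            then show "m v * (\<Sum>z\<in>\<sigma>. gv v z) = m v" using xy(1) by simp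
          qed simp
          finally show ?thesis by simp
        qed
        have Cne: "C \<noteq> {}" using msum by auto
        have CK: "C \<in> KB" using r(1-3) Cne by (simp add: order_complex_def)
        have CW: "C \<subseteq> W"
        proof
          fix v assume v: "v \<in> C"
          obtain x y where xy: "v = Some (x, y)" "good x y" using v r(2) by (meson BP_SomeE subsetD)
          have h: "(x = bot \<or> p x \<noteq> 0) \<and> (y = top \<or> p y \<noteq> 0)" using r(6) v xy(1) by blast
          then have "x \<in> insert bot \<sigma>" "y \<in> insert top \<sigma>" using p0 by blast+
          then show "v \<in> W" using xy(1) by (auto simp: W_def)
        qed
        define f where "f = (\<lambda>q. if q \<in> gv ` C then m (the_inv_into C gv q) else 0)"
        have fg: "f (gv v) = m v" if "v \<in> C" for v
          using that the_inv_into_f_f[OF inj that] by (simp add: f_def)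
        have fF: "f \<in> face_simplex (gv ` C)"
          unfolding face_simplex_def
        proof (intro CollectI conjI allI impI)
          fix q show "0 \<le> f q"
          proof (cases "q \<in> gv ` C")
            case True then obtain v where "v \<in> C" "q = gv v" by blast
            then show ?thesis using fg r(4) by (simp add: less_imp_le)
          qed (simp add: f_def)
        next
          fix q assume "q \<notin> gv ` C" then show "f q = 0" by (simp add: f_def)
        next
          have "sum f (gv ` C) = sum (f \<circ> gv) C" by (rule sum.reindex[OF inj])
          also have "\<dots> = sum m C" by (rule sum.cong) (simp_all add: fg)
          finally show "sum f (gv ` C) = 1" using msum by simp
        qed
        have "lin_ext f = V C (\<lambda>v. f (gv v))" by (rule lin_ext_V[OF CK fF])
        also have "\<dots> = V C m" unfolding V_def by (intro ext sum.cong) (simp_all add: fg)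
        also have "\<dots> = p" by (rule r(7))
        finally have "lin_ext f = p" .
        moreover have "gv ` C \<in> F" using CK CW by (auto simp: F_def)
        ultimately show "p \<in> (\<Union>\<tau>\<in>F. lin_ext ` face_simplex \<tau>)" using fF by blast
      qed
    qed
    ultimately show "\<exists>F. finite F \<and> F \<subseteq> (`) gv ` KB \<and> face_simplex \<sigma> = (\<Union>\<tau>\<in>F. lin_ext ` face_simplex \<tau>)"
      by blast
  qed
qed

theorem main: "PL_homeomorphic KB LP"
  unfolding PL_homeomorphic_def
proof (intro exI conjI)
  show "subdivision ((`) dlt ` KB) KB" by (rule subdivision_trivial[OF sc_order_complex])
  show "subdivision ((`) gv ` KB) LP" by (rule sub_main)
  have U: "\<Union>KB \<subseteq> BP" by (auto simp: order_complex_def)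
  show "simplicial_iso ((`) dlt ` KB) ((`) gv ` KB)"
  proof (rule iso_images)
    show "inj_on dlt (\<Union>KB)" using dlt_inj by (rule inj_on_subset) simp
    show "inj_on gv (\<Union>KB)" using gv_inj U by (rule inj_on_subset)
  qed
qed

end

theorem corollary3:
  fixes P :: "'a set" and le :: "'a \<Rightarrow> 'a \<Rightarrow> bool" and I :: "'a set"
  assumes "bounded_poset P le"
    and "finite_length P le"
    and "proper_ideal P le I"
  shows "PL_homeomorphic
           (order_complex (proper_part (bier_carrier P le I) (bier_le le)) (bier_le le))
           (order_complex (proper_part P le) le)"
proof -
  interpret B: bier_setup P le I by (rule bier_setup.intro[OF assms(1) assms(3)])
  show ?thesis using B.main unfolding B.BP_def .
qed


end
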